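(* Let $n=4k+2$ for some integer $k\geq 0$, and let $v\in\mathbb{Z}^n$. If $v$ is contained in an $n$-icube in $\mathbb{Z}^n$, then $|v|^2=v^Tv\in\mathbb{Z}$ is a sum of two squares of integers.
   Context: For $1\leq k\leq n$, a matrix $(v_1|\dotsc|v_k)\in\mathbb{Z}^{n\times k}$ is a $k$-icube in $\mathbb{Z}^n$ of norm $\lambda>0$ if $v_i^Tv_j=\lambda$ for $i=j$ and $v_i^Tv_j=0$ for $i\neq j$. A vector $v$ is "contained in" an $n$-icube if it is one of the columns of some $n$-icube. *)

theory Defs
  imports Main
begin

text \<open>Vectors in Z^n are represented as functions nat => int, of which only the
  coordinates 0..n-1 matter. The inner product over Z^n:\<close>
definition ip :: "nat \<Rightarrow> (nat \<Rightarrow> int) \<Rightarrow> (nat \<Rightarrow> int) \<Rightarrow> int" where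
  "ip n v w = (\<Sum>i<n. v i * w i)"

definition is_icube :: "nat \<Rightarrow> nat \<Rightarrow> int \<Rightarrow> (nat \<Rightarrow> nat \<Rightarrow> int) \<Rightarrow> bool" where
  "is_icube n k lam V \<longleftrightarrow> 1 \<le> k \<and> k \<le> n \<and> lam > 0 \<and>
     (\<forall>i<k. \<forall>j<k. ip n (V i) (V j) = (if i = j then lam else 0))"

definition in_icube :: "nat \<Rightarrow> (nat \<Rightarrow> int) \<Rightarrow> bool" where
  "in_icube n v \<longleftrightarrow> (\<exists>lam V j. is_icube n n lam V \<and> j < n \<and> (\<forall>i<n. V j i = v i))"

end

theory Submission
  imports Defs Complex_Main "HOL-Computational_Algebra.Primes"
begin

lemma dc_ident:
  fixes X Y a b d N :: int
  assumes h: "X^2 + Y^2 = N * d^2"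
  shows "((a^2+b^2-N)*X + 2*(d*N - a*X - b*Y)*a)^2 + ((a^2+b^2-N)*Y + 2*(d*N - a*X - b*Y)*b)^2
         = N * (d*(N+a^2+b^2) - 2*(a*X+b*Y))^2"
  using h by algebra

lemma round_int:
  fixes X d :: int assumes "d > 0"
  shows "\<exists>a. \<bar>2*(X - a*d)\<bar> \<le> d"
proof -
  define a where "a = (2*X + d) div (2*d)"
  have "(2*d) * a \<le> 2*X + d" unfolding a_def
    by (metis div_mod_decomp_int le_add_same_cancel1 mult.commute pos_mod_sign assms zero_less_mult_iff zero_less_numeral)
  moreover have "2*X + d < (2*d) * a + 2*d" unfolding a_def
    using assms pos_mod_bound[of "2*d" "2*X+d"] div_mult_mod_eq[of "2*X+d" "2*d"]
    by (smt (verit, del_insts) mult.commute)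
  ultimately show ?thesis by (intro exI[of _ a]) (auto simp: algebra_simps)
qed

lemma dc_int:
  fixes N :: int
  shows "d > 0 \<Longrightarrow> X^2 + Y^2 = N * d^2 \<Longrightarrow> \<exists>a b. N = a^2 + b^2"
proof (induction "nat d" arbitrary: d X Y rule: less_induct)
  case less
  show ?case
  proof (cases "d dvd X \<and> d dvd Y")
    case True
    then obtain a b where ab: "X = d*a" "Y = d*b" by (auto elim!: dvdE)
    have "d^2 * (a^2 + b^2) = d^2 * N" using less.prems unfolding ab
      by (simp add: power_mult_distrib algebra_simps)
    then have "a^2+b^2 = N" using less.prems(1) by simp
    then show ?thesis by metis
  next
    case False
    obtain a where a: "\<bar>2*(X - a*d)\<bar> \<le> d" using round_int less.prems(1) by blast
    obtain b where b: "\<bar>2*(Y - b*d)\<bar> \<le> d" using round_int less.prems(1) by blast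
    define r where "r = X - a*d"
    define s where "s = Y - b*d"
    define d' where "d' = d*(N+a^2+b^2) - 2*(a*X+b*Y)"
    have dd': "d * d' = r^2 + s^2" unfolding d'_def r_def s_def using less.prems(2)
      by (simp add: power2_eq_square algebra_simps)
    have "r \<noteq> 0 \<or> s \<noteq> 0" using False unfolding r_def s_def by auto
    then have pos: "r^2 + s^2 > 0" by (simp add: sum_power2_gt_zero_iff)
    have "(2*r)^2 \<le> d^2" using a less.prems(1) abs_le_square_iff[of "2*r" d] unfolding r_def by simp
    then have "4*r^2 \<le> d^2" by (simp add: power_mult_distrib)
    moreover have "(2*s)^2 \<le> d^2" using b less.prems(1) abs_le_square_iff[of "2*s" d] unfolding s_def by simp
    hence "4*s^2 \<le> d^2" by (simp add: power_mult_distrib)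
    ultimately have "r^2 + s^2 < d * d" using pos \<open>4*s^2 \<le> d^2\<close> by (simp add: power2_eq_square)
    then have "d * d' < d * d" using dd' by simp
    then have "d' < d" using less.prems(1) by (simp add: mult_less_cancel_left_pos)
    moreover have "d' > 0" using dd' pos less.prems(1) by (metis zero_less_mult_pos)
    moreover have "((a^2+b^2-N)*X + 2*(d*N - a*X - b*Y)*a)^2 + ((a^2+b^2-N)*Y + 2*(d*N - a*X - b*Y)*b)^2
         = N * d'^2" unfolding d'_def by (rule dc_ident[OF less.prems(2)])
    ultimately show ?thesis using less.hyps[of d'] by auto
  qed
qed

lemma dc_rat:
  fixes N :: int and x y :: rat
  assumes "of_int N = x^2 + y^2"
  shows "\<exists>a b. N = a^2 + b^2"
proof -
  obtain p1 q1 where 1: "quotient_of x = (p1, q1)" by fastforce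
  obtain p2 q2 where 2: "quotient_of y = (p2, q2)" by fastforce
  have q: "q1 > 0" "q2 > 0" using quotient_of_denom_pos 1 2 by auto
  have x: "x = of_int p1 / of_int q1" and y: "y = of_int p2 / of_int q2"
    using quotient_of_div 1 2 by auto
  have "of_int ((p1*q2)^2 + (p2*q1)^2) = (of_int (N * (q1*q2)^2) :: rat)"
    using assms q unfolding x y by (simp add: field_simps power_mult_distrib)
  then have "(p1*q2)^2 + (p2*q1)^2 = N * (q1*q2)^2" using of_int_eq_iff by blast
  then show ?thesis using dc_int[of "q1*q2"] q by auto
qed


definition sos4 :: "rat \<Rightarrow> bool" where
  "sos4 r \<longleftrightarrow> (\<exists>a b c d. r = a^2 + b^2 + c^2 + d^2)"

lemma sos4_mult: "sos4 x \<Longrightarrow> sos4 y \<Longrightarrow> sos4 (x*y)"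
  unfolding sos4_def
proof (elim exE)
  fix x1 x2 x3 x4 y1 y2 y3 y4 :: rat
  assume "x = x1^2 + x2^2 + x3^2 + x4^2" "y = y1^2 + y2^2 + y3^2 + y4^2"
  then have "x * y = (x1*y1 - x2*y2 - x3*y3 - x4*y4)^2 + (x1*y2 + x2*y1 + x3*y4 - x4*y3)^2 +
     (x1*y3 - x2*y4 + x3*y1 + x4*y2)^2 + (x1*y4 + x2*y3 - x3*y2 + x4*y1)^2"
    by (simp add: power2_eq_square algebra_simps)
  then show "\<exists>a b c d. x * y = a^2 + b^2 + c^2 + d^2" by blast
qed

lemma sos4_div_sq: "sos4 x \<Longrightarrow> sos4 (x / m^2)"
  unfolding sos4_def
proof (elim exE)
  fix x1 x2 x3 x4 :: rat
  assume "x = x1^2 + x2^2 + x3^2 + x4^2"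
  then have "x / m^2 = (x1/m)^2 + (x2/m)^2 + (x3/m)^2 + (x4/m)^2"
    by (simp add: power_divide add_divide_distrib)
  then show "\<exists>a b c d. x / m^2 = a^2 + b^2 + c^2 + d^2" by blast
qed

lemma sq_inj_mod:
  fixes p h x x' :: nat
  assumes p: "prime p" "p = 2*h+1" and x: "x \<le> h" "x' \<le> h"
    and eq: "(int x)^2 mod int p = (int x')^2 mod int p"
  shows "x = x'"
proof -
  have pi: "prime (int p)" using p(1) prime_nat_int_transfer by blast
  have "int p dvd (int x - int x') * (int x + int x')"
    using eq by (simp add: mod_eq_dvd_iff power2_eq_square algebra_simps)
  then have "int p dvd (int x - int x') \<or> int p dvd (int x + int x')"
    using pi prime_dvd_mult_iff by blast
  then show ?thesis
  proof
    assume d: "int p dvd (int x - int x')"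
    show ?thesis
    proof (rule ccontr)
      assume "x \<noteq> x'"
      then have "\<bar>int p\<bar> \<le> \<bar>int x - int x'\<bar>" using dvd_imp_le_int[OF _ d] by simp
      then show False using x p by linarith
    qed
  next
    assume d: "int p dvd (int x + int x')"
    show ?thesis
    proof (rule ccontr)
      assume "x \<noteq> x'"
      then have "\<bar>int p\<bar> \<le> \<bar>int x + int x'\<bar>" using dvd_imp_le_int[OF _ d] by simp
      then show False using x p by linarith
    qed
  qed
qed

lemma exists_sq_mod:
  fixes p h :: nat
  assumes p: "prime p" "p = 2*h+1"
  shows "\<exists>x y. x \<le> h \<and> y \<le> h \<and> p dvd x^2 + y^2 + 1"
proof -
  have pp: "int p > 0" using p by simp
  define S where "S = (\<lambda>x. (int x)^2 mod int p) ` {0..h}"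
  define T where "T = (\<lambda>y. (-1 - (int y)^2) mod int p) ` {0..h}"
  have "inj_on (\<lambda>x. (int x)^2 mod int p) {0..h}"
  proof (intro inj_onI)
    fix x x' assume "x \<in> {0..h}" "x' \<in> {0..h}" "(int x)^2 mod int p = (int x')^2 mod int p"
    then show "x = x'" by (intro sq_inj_mod[OF p]) auto
  qed
  then have cS: "card S = h+1" unfolding S_def by (simp add: card_image)
  have "inj_on (\<lambda>y. (-1 - (int y)^2) mod int p) {0..h}"
  proof (intro inj_onI)
    fix y y' assume yy: "y \<in> {0..h}" "y' \<in> {0..h}"
      and e: "(-1 - (int y)^2) mod int p = (-1 - (int y')^2) mod int p"
    have "int p dvd (-1 - (int y)^2) - (-1 - (int y')^2)" using e mod_eq_dvd_iff by blast
    then have "int p dvd (int y')^2 - (int y)^2" by simp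
    then have "(int y')^2 mod int p = (int y)^2 mod int p" using mod_eq_dvd_iff by blast
    then show "y = y'" using yy by (intro sq_inj_mod[OF p]) auto
  qed
  then have cT: "card T = h+1" unfolding T_def by (simp add: card_image)
  have sub: "S \<union> T \<subseteq> {0..<int p}" unfolding S_def T_def using pp by auto
  then have "card (S \<union> T) \<le> p" using card_mono[OF _ sub] by simp
  moreover have "finite S" "finite T" unfolding S_def T_def by auto
  ultimately have "card (S \<inter> T) > 0" using card_Un_Int[of S T] cS cT p by auto
  then obtain z where "z \<in> S" "z \<in> T" by (metis card.empty disjoint_iff less_irrefl)
  then obtain x y where xy: "x \<le> h" "y \<le> h"
     "(int x)^2 mod int p = (-1 - (int y)^2) mod int p"
    unfolding S_def T_def by auto
  then have "int p dvd (int x)^2 - (-1 - (int y)^2)" using mod_eq_dvd_iff by blast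
  then have "int p dvd int (x^2 + y^2 + 1)" by (simp add: algebra_simps)
  then have "p dvd x^2 + y^2 + 1" using int_dvd_int_iff by blast
  then show ?thesis using xy by blast
qed

lemma sos4_nat: "n > 0 \<Longrightarrow> sos4 (of_nat n)"
proof (induction n rule: less_induct)
  case (less n)
  show ?case
  proof (cases "n = 1")
    case True
    then have "of_nat n = (1::rat)^2 + 0^2 + 0^2 + 0^2" by simp
    then show ?thesis unfolding sos4_def by blast
  next
    case n1: False
    show ?thesis
    proof (cases "prime n")
      case False
      then obtain m where m: "m dvd n" "m \<noteq> 1" "m \<noteq> n"
        using n1 less.prems prime_nat_iff by auto
      then obtain q where q: "n = m * q" by (auto elim: dvdE)
      then have "m > 0" "q > 0" using less.prems by auto
      have m0: "m > 0" "q > 0" using less.prems q by auto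
      have "q \<noteq> 1" using q m by auto
      then have "q \<ge> 2" using m0 by simp
      then have "m*2 \<le> m*q" by simp
      then have "m < n" using q m0 by linarith
      have "m \<ge> 2" using m m0 by auto
      then have "2*q \<le> m*q" by simp
      then have "q < n" using q m0 by linarith
      have "sos4 (of_nat m * of_nat q)"
        using sos4_mult less.IH \<open>m < n\<close> \<open>q < n\<close> m0 by blast
      then show ?thesis using q by simp
    next
      case True
      show ?thesis
      proof (cases "n = 2")
        case True
        then have "of_nat n = (1::rat)^2 + 1^2 + 0^2 + 0^2" by simp
    then show ?thesis unfolding sos4_def by blast
      next
        case False
        then have "n > 2" using prime_ge_2_nat[OF True] by linarith
        then have "odd n" using True prime_odd_nat by blast
        then obtain h where h: "n = 2*h+1" using oddE by blast
        obtain x y where xy: "x \<le> h" "y \<le> h" "n dvd x^2 + y^2 + 1"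
          using exists_sq_mod[OF True h] by blast
        then obtain m where m: "x^2 + y^2 + 1 = n * m" by (auto elim: dvdE)
        have "m > 0" using m by (metis add_is_0 mult_0_right not_gr0 zero_neq_one)
        have "x^2 \<le> h^2" "y^2 \<le> h^2" using xy by (simp_all add: power_mono)
        then have "n * m \<le> 2*h^2 + 1" using m by linarith
        moreover have "2*h^2 + 1 < n * n" using h \<open>n > 2\<close> by (simp add: power2_eq_square algebra_simps)
        ultimately have "n * m < n * n" by linarith
        then have "m < n" by simp
        then have sm: "sos4 (of_nat m)" using less.IH \<open>m > 0\<close> by blast
        have "of_nat (n*m) = (of_nat x::rat)^2 + (of_nat y)^2 + 1^2 + 0^2"
          by (simp flip: m)
        then have "sos4 (of_nat (n*m))" unfolding sos4_def by blast
        then have "sos4 (of_nat (n*m) * of_nat m / (of_nat m)^2)"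
          using sos4_mult[OF _ sm] sos4_div_sq by blast
        moreover have "of_nat (n*m) * of_nat m / (of_nat m)^2 = (of_nat n :: rat)"
          using \<open>m > 0\<close> by (simp add: power2_eq_square)
        ultimately show ?thesis by simp
      qed
    qed
  qed
qed


definition dotq :: "nat \<Rightarrow> (nat \<Rightarrow> rat) \<Rightarrow> (nat \<Rightarrow> rat) \<Rightarrow> rat" where
  "dotq n x y = (\<Sum>i<n. x i * y i)"

lemma dotq_comm: "dotq n x y = dotq n y x"
  unfolding dotq_def by (simp add: mult.commute)

lemma dotq_cong: "(\<And>i. i < n \<Longrightarrow> x i = x' i) \<Longrightarrow> dotq n x y = dotq n x' y"
  unfolding dotq_def by (intro sum.cong) auto

lemma dotq_cong2: "(\<And>i. i < n \<Longrightarrow> y i = y' i) \<Longrightarrow> dotq n x y = dotq n x y'"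
  unfolding dotq_def by (intro sum.cong) auto

lemma dotq_lin_left: "dotq n (\<lambda>i. x i - c * h i) y = dotq n x y - c * dotq n h y"
  unfolding dotq_def by (simp add: left_diff_distrib sum_subtractf sum_distrib_left mult.assoc)

lemma dotq_lin_right: "dotq n y (\<lambda>i. x i - c * h i) = dotq n y x - c * dotq n y h"
  using dotq_lin_left[of n x c h y] dotq_comm by metis

lemma dotq_diff_right: "dotq n y (\<lambda>i. x i - h i) = dotq n y x - dotq n y h"
  using dotq_lin_right[of n y x 1 h] by simp

lemma dotq_diff_left: "dotq n (\<lambda>i. x i - h i) y = dotq n x y - dotq n h y"
  using dotq_lin_left[of n x 1 h y] by simp

lemma dotq_self_zero: "dotq n h h = 0 \<Longrightarrow> i < n \<Longrightarrow> h i = 0"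
  unfolding dotq_def using sum_nonneg_eq_0_iff[of "{..<n}" "\<lambda>i. h i * h i"] by auto

definition refl :: "nat \<Rightarrow> (nat \<Rightarrow> rat) \<Rightarrow> (nat \<Rightarrow> rat) \<Rightarrow> (nat \<Rightarrow> rat)" where
  "refl n h x = (\<lambda>i. x i - (2 * dotq n x h / dotq n h h) * h i)"

lemma refl_dot: "dotq n (refl n h x) (refl n h y) = dotq n x y"
proof -
  define c where "c = 2 * dotq n x h / dotq n h h"
  define c' where "c' = 2 * dotq n y h / dotq n h h"
  have "dotq n (refl n h x) (refl n h y) = dotq n x y - c' * dotq n x h - c * dotq n h y + c * c' * dotq n h h"
    unfolding refl_def c_def[symmetric] c'_def[symmetric] dotq_lin_left dotq_lin_right
    by (simp add: algebra_simps)
  also have "\<dots> = dotq n x y"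
  proof (cases "dotq n h h = 0")
    case True then show ?thesis unfolding c_def c'_def by simp
  next
    case False then show ?thesis unfolding c_def c'_def using dotq_comm[of n h y]
      by (simp add: field_simps)
  qed
  finally show ?thesis .
qed

definition gram :: "nat \<Rightarrow> rat \<Rightarrow> nat \<Rightarrow> (nat \<Rightarrow> nat \<Rightarrow> rat) \<Rightarrow> bool" where
  "gram n lam M Y \<longleftrightarrow> (\<forall>i<M. \<forall>j<M. dotq n (Y i) (Y j) = (if i = j then lam else 0))"

lemma cancel:
  assumes Y0: "gram n lam n Y0" and U: "gram n lam M U" and "M \<le> n" and "lam > 0"
  shows "m \<le> M \<Longrightarrow> \<exists>Y. gram n lam n Y \<and> (\<forall>j<m. \<forall>i<n. Y j i = U j i)"
proof (induction m)
  case 0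
  then show ?case using Y0 by blast
next
  case (Suc m)
  then obtain Y where Y: "gram n lam n Y" "\<forall>j<m. \<forall>i<n. Y j i = U j i" by auto
  have mM: "m < M" "m < n" using Suc.prems \<open>M \<le> n\<close> by auto
  define a where "a = Y m"
  define b where "b = U m"
  define h where "h = (\<lambda>i. a i - b i)"
  have aa: "dotq n a a = lam" using Y(1) mM unfolding gram_def a_def by auto
  have bb: "dotq n b b = lam" using U mM unfolding gram_def b_def by auto
  have orth: "dotq n (Y j) h = 0" if "j < m" for j
  proof -
    have "dotq n (Y j) a = 0" using Y(1) that mM unfolding gram_def a_def by auto
    moreover have "dotq n (Y j) b = dotq n (U j) b" using Y(2) that by (intro dotq_cong) auto
    moreover have "dotq n (U j) b = 0" using U that mM unfolding gram_def b_def by auto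
    ultimately show ?thesis unfolding h_def dotq_diff_right by simp
  qed
  show ?case
  proof (cases "dotq n h h = 0")
    case True
    then have "\<forall>i<n. Y m i = U m i" using dotq_self_zero unfolding h_def a_def b_def by fastforce
    then show ?thesis using Y by (metis less_Suc_eq)
  next
    case False
    define Y' where "Y' = (\<lambda>j. refl n h (Y j))"
    have g: "gram n lam n Y'" using Y(1) unfolding gram_def Y'_def refl_dot by simp
    have ah: "dotq n a h = lam - dotq n a b" unfolding h_def dotq_diff_right aa ..
    have hh: "dotq n h h = 2 * (lam - dotq n a b)"
      unfolding h_def dotq_diff_right dotq_diff_left aa bb using dotq_comm[of n a b] by simp
    have "Y' m = (\<lambda>i. a i - h i)" unfolding Y'_def refl_def a_def[symmetric] ah hh
      using False hh by (simp)
    then have "\<forall>i<n. Y' m i = U m i" unfolding h_def b_def by simp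
    moreover have "\<forall>j<m. \<forall>i<n. Y' j i = U j i"
      using Y(2) orth unfolding Y'_def refl_def by simp
    ultimately show ?thesis using g by (metis less_Suc_eq)
  qed
qed


definition qm :: "rat \<Rightarrow> rat \<Rightarrow> rat \<Rightarrow> rat \<Rightarrow> nat \<Rightarrow> nat \<Rightarrow> rat" where
  "qm a b c d s r = [[a,b,c,d],[-b,a,-d,c],[-c,d,a,-b],[-d,-c,b,a]] ! s ! r"

definition ublk :: "rat \<Rightarrow> rat \<Rightarrow> rat \<Rightarrow> rat \<Rightarrow> nat \<Rightarrow> nat \<Rightarrow> rat" where
  "ublk a b c d j i = (if i div 4 = j div 4 then qm a b c d (j mod 4) (i mod 4) else 0)"

lemma lt4: "(s::nat) < 4 \<Longrightarrow> s = 0 \<or> s = 1 \<or> s = 2 \<or> s = 3" by auto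

lemma block_sum:
  fixes f :: "nat \<Rightarrow> rat"
  assumes "4*t+4 \<le> n" and "\<And>i. i div 4 \<noteq> t \<Longrightarrow> f i = 0"
  shows "(\<Sum>i<n. f i) = f (4*t) + f (4*t+1) + f (4*t+2) + f (4*t+3)"
proof -
  have "(\<Sum>i<n. f i) = (\<Sum>i\<in>{4*t, 4*t+1, 4*t+2, 4*t+3}. f i)"
  proof (rule sum.mono_neutral_right)
    show "{4*t, 4*t+1, 4*t+2, 4*t+3} \<subseteq> {..<n}" using assms(1) by auto
    show "\<forall>i\<in>{..<n} - {4*t, 4*t+1, 4*t+2, 4*t+3}. f i = 0"
    proof
      fix i assume i: "i \<in> {..<n} - {4*t, 4*t+1, 4*t+2, 4*t+3}"
      have "i div 4 \<noteq> t"
      proof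
        assume "i div 4 = t"
        define r where "r = i mod 4"
        have ie: "i = 4*t + r" using div_mult_mod_eq[of i 4] \<open>i div 4 = t\<close> unfolding r_def by linarith
        have "r < 4" unfolding r_def by simp
        then have "r = 0 \<or> r = 1 \<or> r = 2 \<or> r = 3" by (rule lt4)
        then show False using i unfolding ie by auto
      qed
      then show "f i = 0" by (rule assms(2))
    qed
  qed simp
  also have "\<dots> = f (4*t) + f (4*t+1) + f (4*t+2) + f (4*t+3)" by (simp add: algebra_simps)
  finally show ?thesis .
qed

lemma ublk_sum:
  assumes "4*t+4 \<le> n" "\<And>i. i div 4 \<noteq> t \<Longrightarrow> x i = 0 \<or> y i = 0"
  shows "dotq n x y = x (4*t) * y (4*t) + x (4*t+1) * y (4*t+1) + x (4*t+2) * y (4*t+2) + x (4*t+3) * y (4*t+3)"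
  unfolding dotq_def using assms by (intro block_sum) auto


lemma ublk_val: "r < 4 \<Longrightarrow> s < 4 \<Longrightarrow> ublk a b c d (4*t+s) (4*t+r) = qm a b c d s r"
  unfolding ublk_def by simp

lemma ublk_zero: "i div 4 \<noteq> t \<Longrightarrow> s < 4 \<Longrightarrow> ublk a b c d (4*t+s) i = 0"
  unfolding ublk_def by simp

lemma ublk_vals:
  assumes "s < 4"
  shows "ublk a b c d (4*t+s) (4*t) = qm a b c d s 0" "ublk a b c d (4*t+s) (4*t+1) = qm a b c d s 1"
        "ublk a b c d (4*t+s) (4*t+2) = qm a b c d s 2" "ublk a b c d (4*t+s) (4*t+3) = qm a b c d s 3"
  using ublk_val[OF _ assms, of 0 a b c d t] ublk_val[OF _ assms, of 1 a b c d t]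
     ublk_val[OF _ assms, of 2 a b c d t] ublk_val[OF _ assms, of 3 a b c d t] by simp_all

lemma ublk_dot_block:
  assumes "4*t+4 \<le> n" "s < 4"
  shows "dotq n x (ublk a b c d (4*t+s)) =
    x (4*t) * qm a b c d s 0 + x (4*t+1) * qm a b c d s 1 + x (4*t+2) * qm a b c d s 2 + x (4*t+3) * qm a b c d s 3"
proof -
  have "dotq n x (ublk a b c d (4*t+s)) = x (4*t) * ublk a b c d (4*t+s) (4*t) + x (4*t+1) * ublk a b c d (4*t+s) (4*t+1)
     + x (4*t+2) * ublk a b c d (4*t+s) (4*t+2) + x (4*t+3) * ublk a b c d (4*t+s) (4*t+3)"
    using assms ublk_zero[of _ t s] by (intro ublk_sum[OF assms(1)]) auto
  then show ?thesis unfolding ublk_vals[OF assms(2)] .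
qed

lemma qm_rows:
  assumes "s < 4" "s' < 4" "lam = a^2 + b^2 + c^2 + d^2"
  shows "qm a b c d s 0 * qm a b c d s' 0 + qm a b c d s 1 * qm a b c d s' 1 + qm a b c d s 2 * qm a b c d s' 2 + qm a b c d s 3 * qm a b c d s' 3
    = (if s = s' then lam else 0)"
  using lt4[OF assms(1)] lt4[OF assms(2)]
  by (elim disjE) (simp_all add: qm_def assms(3) power2_eq_square algebra_simps)

lemma ublk_gram:
  assumes lam: "lam = a^2 + b^2 + c^2 + d^2" and "4*k \<le> n"
  shows "gram n lam (4*k) (ublk a b c d)"
  unfolding gram_def
proof (intro allI impI)
  fix j j' assume j: "j < 4*k" "j' < 4*k"
  show "dotq n (ublk a b c d j) (ublk a b c d j') = (if j = j' then lam else 0)"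
  proof (cases "j div 4 = j' div 4")
    case False
    then have "dotq n (ublk a b c d j) (ublk a b c d j') = 0"
      unfolding dotq_def ublk_def by (intro sum.neutral) auto
    then show ?thesis using False by auto
  next
    case True
    define t where "t = j div 4"
    define s where "s = j mod 4"
    define s' where "s' = j' mod 4"
    have js: "j = 4*t+s" "j' = 4*t+s'" unfolding t_def s_def s'_def
      using True div_mult_mod_eq[of j 4] div_mult_mod_eq[of j' 4] by linarith+
    have ss: "s < 4" "s' < 4" unfolding s_def s'_def by simp_all
    have "j div 4 < k" using j(1) less_mult_imp_div_less[of j k 4] by (simp add: mult.commute)
    then have tk: "4*t+4 \<le> n" using \<open>4*k \<le> n\<close> unfolding t_def by linarith
    have e: "dotq n (ublk a b c d j) (ublk a b c d j') = (if s = s' then lam else 0)"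
      unfolding js(2)
      unfolding ublk_dot_block[OF tk ss(2)] unfolding js(1) ublk_vals[OF ss(1)] qm_rows[OF ss(1) ss(2) lam] ..
    have jj: "(j = j') = (s = s')" using js by simp
    show ?thesis unfolding e jj ..
  qed
qed

lemma ublk_orth:
  assumes lam: "lam = a^2 + b^2 + c^2 + d^2" "lam \<noteq> 0" and "4*k \<le> n"
    and orth: "\<And>j. j < 4*k \<Longrightarrow> dotq n x (ublk a b c d j) = 0"
    and i: "i < 4*k"
  shows "x i = 0"
proof -
  define t where "t = i div 4"
  have "i div 4 < k" using i less_mult_imp_div_less[of i k 4] by (simp add: mult.commute)
  then have tk: "4*t+4 \<le> n" "t < k" using \<open>4*k \<le> n\<close> unfolding t_def by linarith+
  have z: "x (4*t) * qm a b c d s 0 + x (4*t+1) * qm a b c d s 1 + x (4*t+2) * qm a b c d s 2 + x (4*t+3) * qm a b c d s 3 = 0"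
    if "s < 4" for s
    using ublk_dot_block[OF tk(1) that, of x a b c d] orth[of "4*t+s"] that tk(2) by simp
  have z0: "x (4*t) * a + x (4*t+1) * b + x (4*t+2) * c + x (4*t+3) * d = 0" using z[of 0] by (simp add: qm_def)
  have z1: "x (4*t) * (-b) + x (4*t+1) * a + x (4*t+2) * (-d) + x (4*t+3) * c = 0" using z[of 1] by (simp add: qm_def)
  have z2: "x (4*t) * (-c) + x (4*t+1) * d + x (4*t+2) * a + x (4*t+3) * (-b) = 0" using z[of 2] by (simp add: qm_def numeral_eq_Suc)
  have z3: "x (4*t) * (-d) + x (4*t+1) * (-c) + x (4*t+2) * b + x (4*t+3) * a = 0" using z[of 3] by (simp add: qm_def numeral_eq_Suc)
  define r where "r = i mod 4"
  have ie: "i = 4*t + r" unfolding t_def r_def by simp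
  have "r < 4" unfolding r_def by simp
  have l: "lam * x (4*t) = 0" "lam * x (4*t+1) = 0" "lam * x (4*t+2) = 0" "lam * x (4*t+3) = 0"
    unfolding lam(1) using z0 z1 z2 z3 by algebra+
  have "lam * x (4*t + r) = 0"
    using lt4[OF \<open>r < 4\<close>] l by auto
  then show ?thesis using lam(2) ie by simp
qed

theorem mainTheorem1:
  fixes k n :: nat and v :: "nat \<Rightarrow> int"
  assumes "n = 4 * k + 2"
    and "in_icube n v"
  shows "\<exists>a b :: int. ip n v v = a^2 + b^2"
proof -
  obtain lam V j0 where ic: "is_icube n n lam V" "j0 < n" "\<forall>i<n. V j0 i = v i"
    using assms(2) unfolding in_icube_def by blast
  have lam0: "lam > 0" and G: "\<forall>i<n. \<forall>j<n. ip n (V i) (V j) = (if i = j then lam else 0)"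
    using ic(1) unfolding is_icube_def by auto
  have "ip n v v = ip n (V j0) (V j0)" unfolding ip_def using ic(3) by (intro sum.cong) auto
  then have vv: "ip n v v = lam" using G ic(2) by simp
  define Y0 where "Y0 = (\<lambda>j i. rat_of_int (V j i))"
  have dY0: "dotq n (Y0 i) (Y0 j) = of_int (ip n (V i) (V j))" for i j
    unfolding dotq_def ip_def Y0_def by simp
  have gY0: "gram n (of_int lam) n Y0"
    unfolding gram_def dY0 using G by simp
  have "sos4 (of_nat (nat lam))" using lam0 by (intro sos4_nat) simp
  moreover have "(of_nat (nat lam) :: rat) = of_int lam" using lam0 by simp
  ultimately obtain a b c d :: rat where abcd: "of_int lam = a^2 + b^2 + c^2 + d^2"
    unfolding sos4_def by auto
  have kn: "4*k \<le> n" using assms(1) by simp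
  have gU: "gram n (of_int lam) (4*k) (ublk a b c d)" by (rule ublk_gram[OF abcd kn])
  obtain Y where Y: "gram n (of_int lam) n Y" "\<forall>j<4*k. \<forall>i<n. Y j i = ublk a b c d j i"
    using cancel[OF gY0 gU kn, of "4*k"] lam0 by auto
  define z where "z = Y (4*k)"
  have kn': "4*k < n" using assms(1) by simp
  have orth: "dotq n z (ublk a b c d j) = 0" if "j < 4*k" for j
  proof -
    have "dotq n z (ublk a b c d j) = dotq n z (Y j)"
      using Y(2) that by (intro dotq_cong2) auto
    also have "\<dots> = 0" using Y(1) that kn' unfolding gram_def z_def by auto
    finally show ?thesis .
  qed
  have zi: "z i = 0" if "i < 4*k" for i
    using ublk_orth[OF abcd _ kn orth that] lam0 by simp
  have "of_int lam = dotq n z z" using Y(1) kn' unfolding gram_def z_def by auto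
  also have "\<dots> = (\<Sum>i<4*k. z i * z i) + z (4*k) * z (4*k) + z (4*k+1) * z (4*k+1)"
  proof -
    have nn: "n = Suc (Suc (4*k))" using assms(1) by simp
    show ?thesis unfolding dotq_def nn sum.lessThan_Suc by simp
  qed
  also have "(\<Sum>i<4*k. z i * z i) = 0" using zi by (intro sum.neutral) auto
  finally have "of_int lam = (z (4*k))^2 + (z (4*k+1))^2" by (simp add: power2_eq_square)
  then obtain a' b' where "lam = a'^2 + b'^2" using dc_rat by blast
  then show ?thesis using vv by blast
qed

end
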